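(* Fix $\epsilon>0$, $\delta>0$ and an integer $L\geq 2$ such that $2\epsilon<\delta\leq 1/L$, and suppose the prior distribution of $v^*$ is uniform on $[0,1)$. Then \[ \log\frac{1}{\epsilon}\ \leq\ N_B^*(\epsilon,\delta,L)\ \leq\ L\log\frac{1}{L\epsilon}+L-1 . \]
   Context: Bayesian private learning model. The true value $v^*$ is random with a prior distribution $P_{v^*}$ on $[0,1)$ known to everyone. A learner submits queries $q_k\in[0,1)$ and receives $r_k=\mathbb{I}(v^*\geq q_k)$. A learner strategy $\phi$ of length $N$ (which may depend on $P_{v^*}$) uses a random seed $Y$ uniform on $\{1,\dots,\mathcal{Y}\}$, independent of $v^*$, with $q_1=\phi_1(Y)$, $q_k=\phi_k(r_1,\dots,r_{k-1},Y)$, and estimate $\hat x=\phi^E(r_1,\dots,r_N,Y)\in[0,1)$; $\Phi_N$ is the set of such strategies. An adversary strategy $\psi$ maps the prior $P_{v^*}$, the learner strategy $\phi$ and the observed query sequence $\overline q=(q_1,\dots,q_N)$ (but not the responses) to a random estimate $\hat x^a\in[0,1)$; $\Psi$ denotes the set of all adversary strategies. A learner strategy $\phi\in\Phi_N$ is $(\epsilon,\delta,L)$-B-private if (1) $\mathbb{P}(|\hat x(v^*,Y)-v^*|\leq\epsilon/2)=1$ (probability over $v^*$ and $Y$), and (2) for every adversary strategy $\psi\in\Psi$, $\mathbb{P}(|\hat x^a-v^*|\leq\delta/2)\leq 1/L$ (probability over $v^*$, $Y$ and $\hat x^a$). $N_B^*(\epsilon,\delta,L)=\min\{N\in\mathbb{N}:\exists\,\phi\in\Phi_N\text{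 that is }(\epsilon,\delta,L)\text{-B-private}\}$. Logarithms are base 2 and non-integer quantities are rounded up to the nearest integer. *)

theory Defs
  imports "HOL-Probability.Probability"
begin

text \<open>A learner strategy of length N is represented by a triple (Yc, q, est):
  the seed Y is uniform on {1..Yc}; q k rs y is the (k+1)-th query given the
  previous responses rs (a list of length k) and seed y; est rs y is the estimate
  given all N responses rs and the seed y.\<close>

fun resps :: "(nat \<Rightarrow> bool list \<Rightarrow> nat \<Rightarrow> real) \<Rightarrow> real \<Rightarrow> nat \<Rightarrow> nat \<Rightarrow> bool list" where
  "resps q v y 0 = []"
| "resps q v y (Suc k) = resps q v y k @ [q k (resps q v y k) y \<le> v]"

definition queries :: "(nat \<Rightarrow> bool list \<Rightarrow> nat \<Rightarrow> real) \<Rightarrow> real \<Rightarrow> nat \<Rightarrow> nat \<Rightarrow> real list" where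
  "queries q v y N = map (\<lambda>k. q k (resps q v y k) y) [0..<N]"

definition learner_strategy ::
  "nat \<Rightarrow> nat \<Rightarrow> (nat \<Rightarrow> bool list \<Rightarrow> nat \<Rightarrow> real) \<Rightarrow> (bool list \<Rightarrow> nat \<Rightarrow> real) \<Rightarrow> bool" where
  "learner_strategy N Yc q est \<longleftrightarrow> Yc \<ge> 1
     \<and> (\<forall>k<N. \<forall>rs y. length rs = k \<longrightarrow> y \<in> {1..Yc} \<longrightarrow> q k rs y \<in> {0..<1})
     \<and> (\<forall>rs y. length rs = N \<longrightarrow> y \<in> {1..Yc} \<longrightarrow> est rs y \<in> {0..<1})"

text \<open>An adversary (for the fixed uniform prior and fixed learner strategy) maps the
  observed query sequence to the distribution of its random estimate in [0,1).\<close>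

definition adversary :: "(real list \<Rightarrow> real measure) \<Rightarrow> bool" where
  "adversary psi \<longleftrightarrow> (\<forall>qs. prob_space (psi qs) \<and> sets (psi qs) = sets borel
                          \<and> emeasure (psi qs) {0..<1} = 1)"

definition B_private_unif ::
  "real \<Rightarrow> real \<Rightarrow> nat \<Rightarrow> nat \<Rightarrow> nat \<Rightarrow> (nat \<Rightarrow> bool list \<Rightarrow> nat \<Rightarrow> real) \<Rightarrow> (bool list \<Rightarrow> nat \<Rightarrow> real) \<Rightarrow> bool" where
  "B_private_unif \<epsilon> \<delta> L N Yc q est \<longleftrightarrow>
     learner_strategy N Yc q est
   \<and> (\<Sum>y\<in>{1..Yc}. emeasure lborel {v \<in> {0..<1}. \<bar>est (resps q v y N) y - v\<bar> \<le> \<epsilon> / 2})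
        / of_nat Yc = 1
   \<and> (\<forall>psi. adversary psi \<longrightarrow>
        (\<Sum>y\<in>{1..Yc}. \<integral>\<^sup>+ v. indicator {0..<1} v
             * emeasure (psi (queries q v y N)) {x. \<bar>x - v\<bar> \<le> \<delta> / 2} \<partial>lborel)
        / of_nat Yc \<le> 1 / of_nat L)"

definition NB_unif :: "real \<Rightarrow> real \<Rightarrow> nat \<Rightarrow> nat" where
  "NB_unif \<epsilon> \<delta> L = (LEAST N. \<exists>Yc q est. B_private_unif \<epsilon> \<delta> L N Yc q est)"

end

theory Submission
  imports Defs
begin


definition uf :: "nat \<Rightarrow> real \<Rightarrow> real" where
  "uf L v = real L * v - of_int \<lfloor>real L * v\<rfloor>"
definition pf :: "nat \<Rightarrow> nat \<Rightarrow> real \<Rightarrow> nat" where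
  "pf L i v = nat \<lfloor>uf L v * 2 ^ i\<rfloor>"
definition jst :: "nat \<Rightarrow> real \<Rightarrow> nat" where
  "jst L v = nat \<lfloor>real L * v\<rfloor>"
definition Qc :: "nat \<Rightarrow> nat \<Rightarrow> nat \<Rightarrow> nat \<Rightarrow> real" where
  "Qc L K k c = (if k < L - 1 then real (k+1) / real L
     else (real ((k - (L-1)) mod L) + (2 * real (c div 2^(K - (k - (L-1)) div L)) + 1)
            / 2^((k - (L-1)) div L + 1)) / real L)"
definition QQ :: "nat \<Rightarrow> nat \<Rightarrow> nat \<Rightarrow> real \<Rightarrow> real" where
  "QQ L K k v = Qc L K k (pf L K v)"
definition RR :: "nat \<Rightarrow> nat \<Rightarrow> real \<Rightarrow> nat \<Rightarrow> bool list" where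
  "RR L K v n = map (\<lambda>k. QQ L K k v \<le> v) [0..<n]"
definition qq :: "nat \<Rightarrow> nat \<Rightarrow> nat \<Rightarrow> bool list \<Rightarrow> nat \<Rightarrow> real" where
  "qq L K k rs y = (if \<exists>w\<in>{0..<1}. RR L K w k = rs
      then QQ L K k (SOME w. w \<in> {0..<1} \<and> RR L K w k = rs) else 0)"
definition EE :: "nat \<Rightarrow> nat \<Rightarrow> real \<Rightarrow> real" where
  "EE L K v = (real (jst L v) + (real (pf L K v) + 1/2) / 2^K) / real L"
definition ee :: "nat \<Rightarrow> nat \<Rightarrow> bool list \<Rightarrow> nat \<Rightarrow> real" where
  "ee L K rs y = (if \<exists>w\<in>{0..<1}. RR L K w (L - 1 + L * K) = rs
      then EE L K (SOME w. w \<in> {0..<1} \<and> RR L K w (L - 1 + L * K) = rs) else 0)"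

lemma uf_bounds: "0 \<le> uf L v" "uf L v < 1"
  unfolding uf_def by linarith+

lemma jst_eq: "v \<ge> 0 \<Longrightarrow> real (jst L v) = real L * v - uf L v"
  unfolding jst_def uf_def by simp

lemma jst_lt: "L \<ge> 1 \<Longrightarrow> 0 \<le> v \<Longrightarrow> v < 1 \<Longrightarrow> jst L v < L"
proof -
  assume a: "L \<ge> 1" "0 \<le> v" "v < 1"
  have "real L * v < real L" using a by simp
  hence "\<lfloor>real L * v\<rfloor> < int L" by (simp add: floor_less_iff)
  thus ?thesis unfolding jst_def using a by (simp add: nat_less_iff)
qed

lemma pf_bounds: "real (pf L i v) \<le> uf L v * 2^i" "uf L v * 2^i < real (pf L i v) + 1"
  "pf L i v < 2^i"
proof -
  have z: "0 \<le> uf L v * 2^i" using uf_bounds by simp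
  have u: "uf L v * 2^i < 2^i" using uf_bounds by simp
  show "real (pf L i v) \<le> uf L v * 2^i" unfolding pf_def using z by linarith
  show "uf L v * 2^i < real (pf L i v) + 1" unfolding pf_def using z by linarith
  have f: "\<lfloor>uf L v * 2^i\<rfloor> < 2^i" using u by (simp add: floor_less_iff)
  have f0: "0 \<le> \<lfloor>uf L v * 2^i\<rfloor>" using z by simp
  show "pf L i v < 2^i" unfolding pf_def using f f0 by (simp add: nat_less_iff)
qed

lemma pf_div: "i \<le> K \<Longrightarrow> pf L K v div 2^(K-i) = pf L i v"
proof -
  assume "i \<le> K"
  hence e: "(2::real)^K = 2^i * 2^(K-i)" by (metis le_add_diff_inverse power_add)
  have z: "0 \<le> uf L v * 2^K" using uf_bounds by simp
  have "\<lfloor>uf L v * 2^K / real_of_int (2^(K-i))\<rfloor> = \<lfloor>uf L v * 2^K\<rfloor> div 2^(K-i)"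
    by (rule floor_divide_real_eq_div) simp
  moreover have "uf L v * 2^K / real_of_int (2^(K-i)) = uf L v * 2^i" using e by simp
  ultimately have "\<lfloor>uf L v * 2^i\<rfloor> = \<lfloor>uf L v * 2^K\<rfloor> div 2^(K-i)" by simp
  thus ?thesis unfolding pf_def using z
    by (simp add: nat_div_distrib nat_power_eq)
qed

lemma pf_0: "pf L 0 v = 0"
  unfolding pf_def using uf_bounds[of L v] by simp

lemma pf_Suc: "pf L (Suc i) v = 2 * pf L i v + (if (2 * real (pf L i v) + 1) / 2^(i+1) \<le> uf L v then 1 else 0)"
proof -
  have a: "real (pf L i v) \<le> uf L v * 2^i" "uf L v * 2^i < real (pf L i v) + 1"
    using pf_bounds by auto
  have b: "real (pf L (Suc i) v) \<le> uf L v * 2^Suc i" "uf L v * 2^Suc i < real (pf L (Suc i) v) + 1"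
    by (rule pf_bounds)+
  have c: "((2 * real (pf L i v) + 1) / 2^(i+1) \<le> uf L v) = (2 * real (pf L i v) + 1 \<le> uf L v * 2^Suc i)"
    by (simp add: divide_le_eq mult.commute)
  show ?thesis
  proof (cases "2 * real (pf L i v) + 1 \<le> uf L v * 2^Suc i")
    case True
    then have "real (2 * pf L i v) < real (pf L (Suc i) v)" "real (pf L (Suc i) v) < real (2 * pf L i v + 2)" using a b by simp_all
    then have "2 * pf L i v < pf L (Suc i) v" "pf L (Suc i) v < 2 * pf L i v + 2" by (simp_all only: of_nat_less_iff)
    then have "pf L (Suc i) v = 2 * pf L i v + 1" by linarith
    then show ?thesis using c True by simp
  next
    case False
    then have "real (2 * pf L i v) < real (pf L (Suc i) v) + 1" "real (pf L (Suc i) v) < real (2 * pf L i v + 1)" using a b by simp_all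
    then have "2 * pf L i v < pf L (Suc i) v + 1" "pf L (Suc i) v < 2 * pf L i v + 1" by (simp_all only: of_nat_less_iff of_nat_add of_nat_1)
    then have "pf L (Suc i) v = 2 * pf L i v" by linarith
    then show ?thesis using c False by simp
  qed
qed

lemma QQ_small: "k < L - 1 \<Longrightarrow> QQ L K k v = real (k+1) / real L"
  unfolding QQ_def Qc_def by simp

lemma jst_le: "0 \<le> v \<Longrightarrow> real (jst L v) \<le> real L * v" "0 \<le> v \<Longrightarrow> real L * v < real (jst L v) + 1"
  using jst_eq[of v L] uf_bounds[of L v] by auto

lemma jst_cons_aux:
  assumes L: "L \<ge> 2" and v: "0 \<le> v" "v < 1" and w: "0 \<le> w" "w < 1"
    and agree: "\<forall>m<L-1. (QQ L K m w \<le> w) = (QQ L K m v \<le> v)"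
    and lt: "jst L w < jst L v"
  shows False
proof -
  define m where "m = jst L v - 1"
  have jl: "jst L v < L" using jst_lt[of L v] L v by simp
  have m1: "m < L - 1" "m + 1 = jst L v" using jl lt unfolding m_def by auto
  have q: "QQ L K m x = real (jst L v) / real L" for x
    using QQ_small[OF m1(1)] m1(2) by simp
  have Lp: "real L > 0" using L by simp
  have "real (jst L v) / real L \<le> v" using jst_le(1)[OF v(1), of L] Lp
    by (simp add: divide_le_eq mult.commute)
  moreover have "\<not> real (jst L v) / real L \<le> w"
  proof -
    have "real L * w < real (jst L w) + 1" using jst_le(2)[OF w(1)] .
    also have "\<dots> \<le> real (jst L v)" using lt by simp
    finally show ?thesis using Lp by (simp add: divide_le_eq mult.commute)
  qed
  ultimately show False using agree m1(1) q by metis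
qed

lemma jst_cons:
  assumes L: "L \<ge> 2" and v: "0 \<le> v" "v < 1" and w: "0 \<le> w" "w < 1"
    and agree: "\<forall>m<L-1. (QQ L K m w \<le> w) = (QQ L K m v \<le> v)"
  shows "jst L w = jst L v"
proof -
  have "\<not> jst L w < jst L v" using jst_cons_aux[OF L v w agree] by blast
  moreover have "\<not> jst L v < jst L w" using jst_cons_aux[OF L w v] agree by metis
  ultimately show ?thesis by simp
qed

lemma resp_bit:
  assumes L: "L \<ge> 2" and v: "0 \<le> v" "v < 1" and i: "i < K"
  shows "(QQ L K (L - 1 + L * i + jst L v) v \<le> v) = ((2 * real (pf L i v) + 1) / 2^(i+1) \<le> uf L v)"
proof -
  let ?k = "L - 1 + L * i + jst L v"
  have jl: "jst L v < L" using jst_lt[of L v] L v by simp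
  have d: "(?k - (L-1)) div L = i" "(?k - (L-1)) mod L = jst L v" using jl L by auto
  have "QQ L K ?k v = (real (jst L v) + (2 * real (pf L i v) + 1) / 2^(i+1)) / real L"
    unfolding QQ_def Qc_def using d pf_div[of i K L v] i by simp
  moreover have "real L > 0" using L by simp
  ultimately have "(QQ L K ?k v \<le> v) = (real (jst L v) + (2 * real (pf L i v) + 1) / 2^(i+1) \<le> real L * v)"
    by (simp add: divide_le_eq mult.commute)
  also have "\<dots> = ((2 * real (pf L i v) + 1) / 2^(i+1) \<le> uf L v)"
    using jst_eq[OF v(1), of L] by linarith
  finally show ?thesis .
qed

lemma pf_cons:
  assumes L: "L \<ge> 2" and v: "0 \<le> v" "v < 1" and w: "0 \<le> w" "w < 1"
    and agree: "\<forall>m<n. (QQ L K m w \<le> w) = (QQ L K m v \<le> v)"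
    and n: "L - 1 + L * i \<le> n" and iK: "i \<le> K"
  shows "pf L i w = pf L i v"
  using n iK
proof (induction i)
  case 0
  then show ?case by (simp add: pf_0)
next
  case (Suc i)
  have IH: "pf L i w = pf L i v" using Suc by simp
  have "\<forall>m<L-1. (QQ L K m w \<le> w) = (QQ L K m v \<le> v)" using agree Suc.prems by auto
  hence j: "jst L w = jst L v" using jst_cons[OF L v w] by blast
  have jl: "jst L v < L" using jst_lt[of L v] L v by simp
  have "L - 1 + L * i + jst L v < n" using Suc.prems jl by simp
  hence "(QQ L K (L - 1 + L * i + jst L v) w \<le> w) = (QQ L K (L - 1 + L * i + jst L v) v \<le> v)"
    using agree by simp
  hence "((2 * real (pf L i w) + 1) / 2^(i+1) \<le> uf L w) = ((2 * real (pf L i v) + 1) / 2^(i+1) \<le> uf L v)"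
    using resp_bit[OF L v, of i K] resp_bit[OF L w, of i K] j Suc.prems by simp
  then show ?case using pf_Suc[of L i w] pf_Suc[of L i v] IH by simp
qed

lemma QQ_cons:
  assumes L: "L \<ge> 2" and v: "0 \<le> v" "v < 1" and w: "0 \<le> w" "w < 1"
    and agree: "\<forall>m<k. (QQ L K m w \<le> w) = (QQ L K m v \<le> v)"
    and k: "k < L - 1 + L * K"
  shows "QQ L K k w = QQ L K k v"
proof (cases "k < L - 1")
  case True
  then show ?thesis by (simp add: QQ_small)
next
  case False
  define i where "i = (k - (L-1)) div L"
  have "k - (L-1) < L * K" using k False by arith
  hence "k - (L-1) < K * L" by (simp add: mult.commute)
  hence iK: "i < K" unfolding i_def by (rule less_mult_imp_div_less)
  have "L * i \<le> k - (L-1)" unfolding i_def by (rule times_div_less_eq_dividend)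
  hence n: "L - 1 + L * i \<le> k" using False by simp
  have "pf L i w = pf L i v" using pf_cons[OF L v w agree n] iK by simp
  hence c: "pf L K w div 2^(K-i) = pf L K v div 2^(K-i)" using pf_div[of i K L] iK by simp
  show ?thesis unfolding QQ_def Qc_def i_def[symmetric] using False c by simp
qed

lemma RR_agree: "RR L K w n = RR L K v n \<Longrightarrow> \<forall>m<n. (QQ L K m w \<le> w) = (QQ L K m v \<le> v)"
proof (intro allI impI)
  fix m assume e: "RR L K w n = RR L K v n" and m: "m < n"
  have "RR L K w n ! m = RR L K v n ! m" using e by simp
  thus "(QQ L K m w \<le> w) = (QQ L K m v \<le> v)" using m by (simp add: RR_def)
qed

lemma qq_RR:
  assumes L: "L \<ge> 2" and v: "0 \<le> v" "v < 1" and n: "n < L - 1 + L * K"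
  shows "qq L K n (RR L K v n) y = QQ L K n v"
proof -
  have ex: "\<exists>w\<in>{0..<1}. RR L K w n = RR L K v n" using v by auto
  define w where "w = (SOME w. w \<in> {0..<1} \<and> RR L K w n = RR L K v n)"
  have w: "w \<in> {0..<1} \<and> RR L K w n = RR L K v n" unfolding w_def
    by (rule someI_ex) (use ex in blast)
  have "QQ L K n w = QQ L K n v"
    using QQ_cons[OF L v, of w n K] w RR_agree[of L K w n v] n by auto
  thus ?thesis unfolding qq_def using ex w_def by simp
qed

lemma resps_RR:
  assumes L: "L \<ge> 2" and v: "0 \<le> v" "v < 1"
  shows "n \<le> L - 1 + L * K \<Longrightarrow> resps (qq L K) v y n = RR L K v n"
proof (induction n)
  case 0
  then show ?case by (simp add: RR_def)
next
  case (Suc n)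
  then have "resps (qq L K) v y (Suc n) = RR L K v n @ [qq L K n (RR L K v n) y \<le> v]" by simp
  also have "\<dots> = RR L K v n @ [QQ L K n v \<le> v]" using qq_RR[OF L v] Suc.prems by simp
  also have "\<dots> = RR L K v (Suc n)" by (simp add: RR_def)
  finally show ?case .
qed

lemma length_resps: "length (resps q v y n) = n"
  by (induction n) auto

lemma queries_eq:
  assumes L: "L \<ge> 2" and v: "0 \<le> v" "v < 1"
  shows "queries (qq L K) v y (L - 1 + L * K) = map (\<lambda>k. QQ L K k v) [0..<L - 1 + L * K]"
  unfolding queries_def using resps_RR[OF L v] qq_RR[OF L v] by simp

lemma ee_RR:
  assumes L: "L \<ge> 2" and v: "0 \<le> v" "v < 1"
  shows "ee L K (RR L K v (L - 1 + L * K)) y = EE L K v"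
proof -
  let ?N = "L - 1 + L * K"
  have ex: "\<exists>w\<in>{0..<1}. RR L K w ?N = RR L K v ?N" using v by auto
  define w where "w = (SOME w. w \<in> {0..<1} \<and> RR L K w ?N = RR L K v ?N)"
  have w: "w \<in> {0..<1} \<and> RR L K w ?N = RR L K v ?N" unfolding w_def
    by (rule someI_ex) (use ex in blast)
  have ag: "\<forall>m<?N. (QQ L K m w \<le> w) = (QQ L K m v \<le> v)" using RR_agree w by blast
  have "\<forall>m<L-1. (QQ L K m w \<le> w) = (QQ L K m v \<le> v)" using ag by auto
  hence "jst L w = jst L v" using jst_cons[OF L v] w by auto
  moreover have "pf L K w = pf L K v" using pf_cons[OF L v _ _ ag, of K] w by auto
  ultimately have "EE L K w = EE L K v" unfolding EE_def by simp
  thus ?thesis unfolding ee_def using ex w_def by simp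
qed

lemma QQ_range:
  assumes L: "L \<ge> 2" and w: "0 \<le> w" "w < 1" and k: "k < L - 1 + L * K"
  shows "0 \<le> QQ L K k w \<and> QQ L K k w < 1"
proof (cases "k < L - 1")
  case True
  then have "real (k+1) < real L" by simp
  then show ?thesis using True L by (simp add: QQ_small)
next
  case False
  define i where "i = (k - (L-1)) div L"
  define j where "j = (k - (L-1)) mod L"
  have "k - (L-1) < L * K" using k False by arith
  hence "k - (L-1) < K * L" by (simp add: mult.commute)
  hence iK: "i < K" unfolding i_def by (rule less_mult_imp_div_less)
  have jL: "j < L" unfolding j_def using L by simp
  have c: "pf L K w div 2^(K-i) = pf L i w" using pf_div[of i K L] iK by simp
  have p: "pf L i w < 2^i" by (rule pf_bounds)
  hence "2 * pf L i w + 1 < 2^(i+1)" by simp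
  hence "real (2 * pf L i w + 1) < real (2^(i+1))" by (simp only: of_nat_less_iff)
  hence t: "(2 * real (pf L i w) + 1) / 2^(i+1) < 1" by simp
  have jj: "real j + 1 \<le> real L" using jL by simp
  have e: "QQ L K k w = (real j + (2 * real (pf L i w) + 1) / 2^(i+1)) / real L"
    unfolding QQ_def Qc_def i_def[symmetric] j_def[symmetric] using False c by simp
  have "real j + (2 * real (pf L i w) + 1) / 2^(i+1) < real L" using t jj by linarith
  then show ?thesis using e L by (simp add: divide_less_eq)
qed

lemma EE_range:
  assumes L: "L \<ge> 2" and w: "0 \<le> w" "w < 1"
  shows "0 \<le> EE L K w \<and> EE L K w < 1"
proof -
  have jL: "jst L w < L" using jst_lt[of L w] L w by simp
  have p: "pf L K w < 2^K" by (rule pf_bounds)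
  hence "pf L K w + 1 \<le> 2^K" by simp
  hence "real (pf L K w + 1) \<le> real (2^K)" by (simp only: of_nat_le_iff)
  hence "real (pf L K w) + 1 \<le> 2^K" by simp
  hence t: "(real (pf L K w) + 1/2) / 2^K < 1" by simp
  have jj: "real (jst L w) + 1 \<le> real L" using jL by simp
  have "real (jst L w) + (real (pf L K w) + 1/2) / 2^K < real L" using t jj by linarith
  then show ?thesis unfolding EE_def using L by (simp add: divide_less_eq)
qed

lemma EE_acc:
  assumes L: "L \<ge> 2" and v: "0 \<le> v"
  shows "\<bar>EE L K v - v\<bar> \<le> 1 / (2 * real L * 2^K)"
proof -
  have a: "real (pf L K v) \<le> uf L v * 2^K" "uf L v * 2^K < real (pf L K v) + 1" by (rule pf_bounds)+
  have "\<bar>(real (pf L K v) + 1/2) / 2^K - uf L v\<bar> \<le> 1 / (2 * 2^K)"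
  proof -
    have "\<bar>(real (pf L K v) + 1/2) - uf L v * 2^K\<bar> \<le> 1/2" using a by linarith
    hence "\<bar>(real (pf L K v) + 1/2) - uf L v * 2^K\<bar> / 2^K \<le> (1/2) / 2^K"
      by (rule divide_right_mono) simp
    moreover have "\<bar>(real (pf L K v) + 1/2) - uf L v * 2^K\<bar> / 2^K = \<bar>(real (pf L K v) + 1/2) / 2^K - uf L v\<bar>"
    proof -
      have eq: "((real (pf L K v) + 1/2) - uf L v * 2^K) / 2^K = (real (pf L K v) + 1/2) / 2^K - uf L v"
        by (simp add: diff_divide_distrib)
      have "\<bar>(real (pf L K v) + 1/2) - uf L v * 2^K\<bar> / 2^K = \<bar>((real (pf L K v) + 1/2) - uf L v * 2^K) / 2^K\<bar>"
        by (simp add: abs_divide)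
      thus ?thesis using eq by simp
    qed
    ultimately show ?thesis by simp
  qed
  moreover have "EE L K v - v = ((real (pf L K v) + 1/2) / 2^K - uf L v) / real L"
    unfolding EE_def jst_eq[OF v, of L] using L by (simp add: field_simps)
  moreover have "real L > 0" using L by simp
  ultimately have "\<bar>EE L K v - v\<bar> \<le> (1 / (2 * 2^K)) / real L"
    by (metis abs_divide abs_of_pos divide_right_mono less_eq_real_def)
  thus ?thesis by (simp add: mult.commute mult.left_commute)
qed



definition SS :: "nat \<Rightarrow> nat \<Rightarrow> nat \<Rightarrow> real set" where
  "SS L K c = {v \<in> {0..<1}. pf L K v = c}"

lemma emeasure_Ico_gen: "emeasure lborel {p..<q::real} = ennreal (q - p)"
  by (cases "p \<le> q") (auto simp: ennreal_neg)

lemma SS_mem: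
  assumes "v \<in> SS L K c"
  shows "0 \<le> v" "v < 1" "real c \<le> uf L v * 2^K" "uf L v * 2^K < real c + 1"
    "real L * v = of_int \<lfloor>real L * v\<rfloor> + uf L v"
  using assms pf_bounds(1,2)[where L=L and i=K and v=v] unfolding SS_def uf_def by auto

lemma geom:
  assumes L: "L \<ge> 2" and dl: "\<delta> \<le> 1 / real L" and d0: "0 < \<delta>"
  shows "emeasure lborel (SS L K c \<inter> {v. \<bar>x - v\<bar> \<le> \<delta> / 2}) \<le> ennreal (1 / (real L * 2^K))"
proof -
  define M :: real where "M = 2^K"
  have M1: "M \<ge> 1" unfolding M_def by simp
  have Lp: "real L > 0" using L by simp
  define \<alpha> where "\<alpha> = real c / M"
  define a where "a = \<alpha> / real L"
  define l where "l = 1 / (M * real L)"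
  define z where "z = x - \<delta> / 2"
  define j where "j = \<lfloor>real L * z - \<alpha>\<rfloor>"
  define d where "d = z - a - real_of_int j / real L"
  have jZ: "real_of_int j \<le> real L * z - \<alpha>" "real L * z - \<alpha> < real_of_int j + 1"
    unfolding j_def by linarith+
  have dd: "real L * d = real L * z - \<alpha> - real_of_int j"
    unfolding d_def a_def using Lp by (simp add: field_simps)
  have "real L * d \<ge> 0" using dd jZ by linarith
  hence d0': "d \<ge> 0" using Lp by (simp add: zero_le_mult_iff)
  have d1: "real L * d < 1" using dd jZ by linarith
  have Ll: "real L * l = 1 / M" unfolding l_def using Lp by simp
  have l0: "l > 0" unfolding l_def using Lp M1 by simp
  define A where "A = {z ..< a + real_of_int j / real L + l}"
  define B where "B = {a + (real_of_int j + 1) / real L .. a + (real_of_int j + 1) / real L + min d l}"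
  have incl: "SS L K c \<inter> {v. \<bar>x - v\<bar> \<le> \<delta> / 2} \<subseteq> A \<union> B"
  proof
    fix v assume v: "v \<in> SS L K c \<inter> {v. \<bar>x - v\<bar> \<le> \<delta> / 2}"
    define k where "k = \<lfloor>real L * v\<rfloor>"
    have vS: "v \<in> SS L K c" and av: "\<bar>x - v\<bar> \<le> \<delta> / 2" using v by auto
    have m: "0 \<le> v" "v < 1" "real c \<le> uf L v * 2^K" "uf L v * 2^K < real c + 1"
      "real L * v = of_int k + uf L v" using SS_mem[OF vS] unfolding k_def by auto
    have u1: "\<alpha> \<le> uf L v" "uf L v < \<alpha> + 1 / M" using m(3,4) M1 unfolding \<alpha>_def M_def
      by (simp_all add: field_simps)
    have zv: "z \<le> v" "v \<le> z + \<delta>" using av unfolding z_def abs_le_iff by linarith+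
    have Ld: "real L * \<delta> \<le> 1" using dl Lp by (simp add: field_simps)
    have V1: "real L * z \<le> real L * v" using zv Lp by simp
    have "real L * v \<le> real L * (z + \<delta>)" using zv Lp by (intro mult_left_mono) simp_all
    hence V2: "real L * v \<le> real L * z + 1" using Ld by (simp add: distrib_left)
    have M1': "1 / M \<le> 1" using M1 by simp
    have kj1: "real_of_int k > real_of_int j - 1" using V1 m(5) u1 jZ M1' by linarith
    have kj2: "real_of_int k < real_of_int j + 2" using V2 m(5) u1 jZ by linarith
    have kk: "k = j \<or> k = j + 1" using kj1 kj2 by linarith
    have sc: "\<And>p q. (p \<le> q) = (real L * p \<le> real L * q)" "\<And>p q. (p < q) = (real L * p < real L * q)"
      using Lp by simp_all
    have e1: "real L * (a + real_of_int j / real L + l) = \<alpha> + real_of_int j + 1 / M"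
      unfolding a_def using Ll Lp by (simp add: field_simps)
    have e2: "real L * (a + (real_of_int j + 1) / real L) = \<alpha> + real_of_int j + 1"
      unfolding a_def using Lp by (simp add: field_simps)
    have e3: "real L * (a + (real_of_int j + 1) / real L + l) = \<alpha> + real_of_int j + 1 + 1 / M"
      unfolding a_def using Ll Lp by (simp add: field_simps)
    have e4: "real L * (a + (real_of_int j + 1) / real L + d) = real L * z + 1"
      unfolding a_def using dd Lp by (simp add: field_simps)
    show "v \<in> A \<union> B"
    proof (cases "k = j")
      case True
      have "real L * v < real L * (a + real_of_int j / real L + l)" using e1 m(5) u1 True by linarith
      hence "v < a + real_of_int j / real L + l" using sc by blast
      then show ?thesis unfolding A_def using zv by auto
    next
      case False
      hence k: "k = j + 1" using kk by simp
      have "real L * (a + (real_of_int j + 1) / real L) \<le> real L * v" using e2 m(5) u1 k by simp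
      hence b1: "a + (real_of_int j + 1) / real L \<le> v" using sc by blast
      have "real L * v < real L * (a + (real_of_int j + 1) / real L + l)" using e3 m(5) u1 k by simp
      hence b2: "v < a + (real_of_int j + 1) / real L + l" using sc by blast
      have "real L * v \<le> real L * (a + (real_of_int j + 1) / real L + d)" using e4 V2 by simp
      hence b3: "v \<le> a + (real_of_int j + 1) / real L + d" using sc by blast
      show ?thesis unfolding B_def using b1 b2 b3 by auto
    qed
  qed
  have "emeasure lborel (SS L K c \<inter> {v. \<bar>x - v\<bar> \<le> \<delta> / 2}) \<le> emeasure lborel (A \<union> B)"
    by (rule emeasure_mono[OF incl]) (simp add: A_def B_def)
  also have "\<dots> \<le> emeasure lborel A + emeasure lborel B"
    by (rule emeasure_subadditive) (simp_all add: A_def B_def)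
  also have "\<dots> = ennreal (l - d) + ennreal (min d l)"
  proof -
    have "emeasure lborel A = ennreal (a + real_of_int j / real L + l - z)"
      unfolding A_def by (rule emeasure_Ico_gen)
    moreover have "a + real_of_int j / real L + l - z = l - d" unfolding d_def by simp
    moreover have "emeasure lborel B = ennreal (min d l)"
      unfolding B_def using d0' l0 by simp
    ultimately show ?thesis by simp
  qed
  also have "\<dots> = ennreal l"
  proof (cases "d \<le> l")
    case True
    then show ?thesis using d0' by (simp add: ennreal_plus[symmetric])
  next
    case False
    then show ?thesis by (simp add: ennreal_neg)
  qed
  finally show ?thesis unfolding l_def M_def by (simp add: mult.commute)
qed

lemma privacy:
  assumes L: "L \<ge> 2" and dl: "\<delta> \<le> 1 / real L" and d0: "0 < \<delta>" and adv: "adversary psi"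
  shows "(\<integral>\<^sup>+ v. indicator {0..<1} v * emeasure (psi (queries (qq L K) v 1 (L - 1 + L * K))) {x. \<bar>x - v\<bar> \<le> \<delta> / 2} \<partial>lborel) \<le> ennreal (1 / real L)"
proof -
  define N where "N = L - 1 + L * K"
  define F where "F c = map (\<lambda>k. Qc L K k c) [0..<N]" for c
  define \<mu> where "\<mu> c = psi (F c)" for c
  define X where "X c = {p::real\<times>real. fst p \<in> SS L K c \<and> \<bar>snd p - fst p\<bar> \<le> \<delta> / 2}" for c
  have prob: "prob_space (\<mu> c)" and sets_\<mu>: "sets (\<mu> c) = sets borel" for c
    using adv unfolding adversary_def \<mu>_def by auto
  have sf: "sigma_finite_measure (\<mu> c)" for c using prob by (simp add: prob_space_imp_sigma_finite)
  have psf: "pair_sigma_finite lborel (\<mu> c)" for c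
    unfolding pair_sigma_finite_def using sf lborel.sigma_finite_measure_axioms by simp
  have SSm: "SS L K c \<in> sets borel" for c unfolding SS_def pf_def uf_def by measurable
  have Xm: "X c \<in> sets (lborel \<Otimes>\<^sub>M \<mu> c)" for c
  proof -
    have e: "sets (lborel \<Otimes>\<^sub>M \<mu> c) = sets (borel \<Otimes>\<^sub>M borel)"
      by (rule sets_pair_measure_cong) (simp_all add: sets_\<mu>)
    have x: "X c = (SS L K c \<times> UNIV) \<inter> {p::real\<times>real. \<bar>snd p - fst p\<bar> \<le> \<delta> / 2}"
      unfolding X_def by auto
    have a0: "{p \<in> space (borel \<Otimes>\<^sub>M borel). \<bar>snd p - fst p\<bar> \<le> (\<delta>::real) / 2} \<in> sets (borel \<Otimes>\<^sub>M borel)"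
      by measurable
    have a: "{p::real\<times>real. \<bar>snd p - fst p\<bar> \<le> \<delta> / 2} \<in> sets (borel \<Otimes>\<^sub>M borel)"
      using a0 by (simp add: space_pair_measure)
    have b: "SS L K c \<times> UNIV \<in> sets (borel \<Otimes>\<^sub>M (borel :: real measure))"
      using SSm by (intro pair_measureI) simp_all
    show ?thesis unfolding e x using a b by auto
  qed
  have pt: "indicator {0..<1} v * emeasure (psi (queries (qq L K) v 1 N)) {x. \<bar>x - v\<bar> \<le> \<delta> / 2}
      = (\<Sum>c<(2::nat)^K. emeasure (\<mu> c) (Pair v -` X c))" for v
  proof (cases "v \<in> {0..<1}")
    case True
    have q: "queries (qq L K) v 1 N = F (pf L K v)"
    proof -
      have "queries (qq L K) v 1 (L - 1 + L * K) = map (\<lambda>k. QQ L K k v) [0..<L - 1 + L * K]"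
        by (rule queries_eq) (use L True in auto)
      thus ?thesis unfolding N_def F_def by (simp add: QQ_def)
    qed
    have pre: "Pair v -` X c = (if c = pf L K v then {x. \<bar>x - v\<bar> \<le> \<delta> / 2} else {})" for c
      unfolding X_def SS_def using True by auto
    have lt: "pf L K v < 2^K" by (rule pf_bounds)
    have "(\<Sum>c<(2::nat)^K. emeasure (\<mu> c) (Pair v -` X c))
        = (\<Sum>c<(2::nat)^K. if c = pf L K v then emeasure (\<mu> c) {x. \<bar>x - v\<bar> \<le> \<delta> / 2} else 0)"
      by (rule sum.cong) (auto simp: pre)
    also have "\<dots> = emeasure (\<mu> (pf L K v)) {x. \<bar>x - v\<bar> \<le> \<delta> / 2}"
      using lt by (simp add: sum.delta)
    finally show ?thesis using True q by (simp add: \<mu>_def)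
  next
    case False
    have "Pair v -` X c = {}" for c unfolding X_def SS_def using False by auto
    then show ?thesis using False by simp
  qed
  have "(\<integral>\<^sup>+ v. indicator {0..<1} v * emeasure (psi (queries (qq L K) v 1 N)) {x. \<bar>x - v\<bar> \<le> \<delta> / 2} \<partial>lborel)
      = (\<integral>\<^sup>+ v. (\<Sum>c<(2::nat)^K. emeasure (\<mu> c) (Pair v -` X c)) \<partial>lborel)"
    using pt by simp
  also have "\<dots> = (\<Sum>c<(2::nat)^K. \<integral>\<^sup>+ v. emeasure (\<mu> c) (Pair v -` X c) \<partial>lborel)"
    by (rule nn_integral_sum) (rule sigma_finite_measure.measurable_emeasure_Pair[OF sf Xm])
  also have "\<dots> = (\<Sum>c<(2::nat)^K. emeasure (lborel \<Otimes>\<^sub>M \<mu> c) (X c))"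
    using sigma_finite_measure.emeasure_pair_measure_alt[OF sf Xm] by simp
  also have "\<dots> = (\<Sum>c<(2::nat)^K. \<integral>\<^sup>+ x. emeasure lborel ((\<lambda>v. (v, x)) -` X c) \<partial>\<mu> c)"
    using pair_sigma_finite.emeasure_pair_measure_alt2[OF psf Xm] by simp
  also have "\<dots> \<le> (\<Sum>c<(2::nat)^K. ennreal (1 / (real L * 2^K)))"
  proof (rule sum_mono)
    fix c assume "c \<in> {..<(2::nat)^K}"
    have "(\<integral>\<^sup>+ x. emeasure lborel ((\<lambda>v. (v, x)) -` X c) \<partial>\<mu> c) \<le> (\<integral>\<^sup>+ x. ennreal (1 / (real L * 2^K)) \<partial>\<mu> c)"
    proof (rule nn_integral_mono)
      fix x
      have "(\<lambda>v. (v, x)) -` X c = SS L K c \<inter> {v. \<bar>x - v\<bar> \<le> \<delta> / 2}" unfolding X_def by auto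
      thus "emeasure lborel ((\<lambda>v. (v, x)) -` X c) \<le> ennreal (1 / (real L * 2^K))"
        using geom[OF L dl d0] by simp
    qed
    also have "\<dots> = ennreal (1 / (real L * 2^K))"
      using prob_space.emeasure_space_1[OF prob] by (simp add: nn_integral_const)
    finally show "(\<integral>\<^sup>+ x. emeasure lborel ((\<lambda>v. (v, x)) -` X c) \<partial>\<mu> c) \<le> ennreal (1 / (real L * 2^K))" .
  qed
  also have "\<dots> = ennreal (1 / real L)"
  proof -
    have "(\<Sum>c<(2::nat)^K. ennreal (1 / (real L * 2^K))) = of_nat (2^K) * ennreal (1 / (real L * 2^K))"
      by simp
    also have "\<dots> = ennreal (real (2^K) * (1 / (real L * 2^K)))"
      by (simp add: ennreal_of_nat_eq_real_of_nat ennreal_mult[symmetric])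
    also have "real (2^K) * (1 / (real L * 2^K)) = 1 / real L" by simp
    finally show ?thesis .
  qed
  finally show ?thesis by (simp add: N_def)
qed



lemma lower_bound:
  assumes P: "B_private_unif \<epsilon> \<delta> L N Yc q est" and e: "\<epsilon> > 0"
  shows "1 \<le> 2^N * \<epsilon>"
proof -
  have Yc: "Yc \<ge> 1" using P unfolding B_private_unif_def learner_strategy_def by simp
  have acc: "(\<Sum>y\<in>{1..Yc}. emeasure lborel {v \<in> {0..<1}. \<bar>est (resps q v y N) y - v\<bar> \<le> \<epsilon> / 2})
        / of_nat Yc = 1" using P unfolding B_private_unif_def by simp
  define Rs where "Rs = {rs::bool list. set rs \<subseteq> UNIV \<and> length rs = N}"
  have fin: "finite Rs" unfolding Rs_def by (rule finite_lists_length_eq) simp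
  have card: "card Rs = 2^N" unfolding Rs_def using card_lists_length_eq[of "UNIV::bool set" N] by simp
  have trm: "emeasure lborel {v \<in> {0..<1}. \<bar>est (resps q v y N) y - v\<bar> \<le> \<epsilon> / 2} \<le> ennreal (2^N * \<epsilon>)" for y
  proof -
    have "{v \<in> {0..<1}. \<bar>est (resps q v y N) y - v\<bar> \<le> \<epsilon> / 2} \<subseteq> (\<Union>rs\<in>Rs. {est rs y - \<epsilon>/2 .. est rs y + \<epsilon>/2})"
    proof
      fix v assume v: "v \<in> {v \<in> {0..<1}. \<bar>est (resps q v y N) y - v\<bar> \<le> \<epsilon> / 2}"
      have "resps q v y N \<in> Rs" unfolding Rs_def by (simp add: length_resps)
      moreover have "v \<in> {est (resps q v y N) y - \<epsilon>/2 .. est (resps q v y N) y + \<epsilon>/2}"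
      proof -
        have "\<bar>est (resps q v y N) y - v\<bar> \<le> \<epsilon> / 2" using v by simp
        thus ?thesis unfolding abs_le_iff by simp
      qed
      ultimately show "v \<in> (\<Union>rs\<in>Rs. {est rs y - \<epsilon>/2 .. est rs y + \<epsilon>/2})" by blast
    qed
    hence "emeasure lborel {v \<in> {0..<1}. \<bar>est (resps q v y N) y - v\<bar> \<le> \<epsilon> / 2}
        \<le> emeasure lborel (\<Union>rs\<in>Rs. {est rs y - \<epsilon>/2 .. est rs y + \<epsilon>/2})"
      by (rule emeasure_mono) (use fin in auto)
    also have "\<dots> \<le> (\<Sum>rs\<in>Rs. emeasure lborel {est rs y - \<epsilon>/2 .. est rs y + \<epsilon>/2})"
      by (rule emeasure_subadditive_finite) (use fin in auto)
    also have "\<dots> = (\<Sum>rs\<in>Rs. ennreal \<epsilon>)" using e by simp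
    also have "\<dots> = of_nat (2^N) * ennreal \<epsilon>" using card by simp
    also have "\<dots> = ennreal (real (2^N)) * ennreal \<epsilon>" by (simp only: ennreal_of_nat_eq_real_of_nat)
    also have "\<dots> = ennreal (real (2^N) * \<epsilon>)" using e by (simp only: ennreal_mult[symmetric] of_nat_0_le_iff less_imp_le)
    also have "real (2^N) * \<epsilon> = 2^N * \<epsilon>" by simp
    finally show ?thesis .
  qed
  have "(\<Sum>y\<in>{1..Yc}. emeasure lborel {v \<in> {0..<1}. \<bar>est (resps q v y N) y - v\<bar> \<le> \<epsilon> / 2})
      \<le> (\<Sum>y\<in>{1..Yc}. ennreal (2^N * \<epsilon>))" by (rule sum_mono) (rule trm)
  also have "\<dots> = ennreal (2^N * \<epsilon>) * of_nat Yc" by (simp add: mult.commute)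
  finally have "(\<Sum>y\<in>{1..Yc}. emeasure lborel {v \<in> {0..<1}. \<bar>est (resps q v y N) y - v\<bar> \<le> \<epsilon> / 2}) / of_nat Yc
      \<le> ennreal (2^N * \<epsilon>) * of_nat Yc / of_nat Yc" by (rule divide_right_mono_ennreal)
  hence "1 \<le> ennreal (2^N * \<epsilon>) * of_nat Yc / of_nat Yc" by (simp only: acc)
  also have "\<dots> = ennreal (2^N * \<epsilon>)"
    by (rule ennreal_mult_divide_eq) (use Yc in auto)
  finally have "ennreal 1 \<le> ennreal (2^N * \<epsilon>)" by simp
  thus ?thesis using e by (simp add: ennreal_le_iff2)
qed

lemma upper_strategy:
  fixes \<epsilon> \<delta> :: real and L K :: nat
  assumes L: "L \<ge> 2" and d0: "0 < \<delta>" and dl: "\<delta> \<le> 1 / real L" and e: "\<epsilon> > 0"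
    and M: "1 / (real L * 2^K) \<le> \<epsilon>"
  shows "B_private_unif \<epsilon> \<delta> L (L - 1 + L * K) 1 (qq L K) (ee L K)"
proof -
  let ?N = "L - 1 + L * K"
  have ls: "learner_strategy ?N 1 (qq L K) (ee L K)"
    unfolding learner_strategy_def
  proof (intro conjI allI impI)
    fix k rs y assume k: "k < ?N"
    show "qq L K k rs y \<in> {0..<1}"
    proof (cases "\<exists>w\<in>{0..<1}. RR L K w k = rs")
      case True
      define w where "w = (SOME w. w \<in> {0..<1} \<and> RR L K w k = rs)"
      have w: "w \<in> {0..<1} \<and> RR L K w k = rs" unfolding w_def
        by (rule someI_ex) (use True in blast)
      have "0 \<le> QQ L K k w \<and> QQ L K k w < 1" using QQ_range[OF L _ _ k] w by auto
      then show ?thesis unfolding qq_def using True w_def by simp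
    next
      case False
      then show ?thesis unfolding qq_def by simp
    qed
  next
    fix rs :: "bool list" and y :: nat
    show "ee L K rs y \<in> {0..<1}"
    proof (cases "\<exists>w\<in>{0..<1}. RR L K w ?N = rs")
      case True
      define w where "w = (SOME w. w \<in> {0..<1} \<and> RR L K w ?N = rs)"
      have w: "w \<in> {0..<1} \<and> RR L K w ?N = rs" unfolding w_def
        by (rule someI_ex) (use True in blast)
      have "0 \<le> EE L K w \<and> EE L K w < 1" using EE_range[OF L] w by auto
      then show ?thesis unfolding ee_def using True w_def by simp
    next
      case False
      then show ?thesis unfolding ee_def by simp
    qed
  qed simp
  have acc: "{v \<in> {0..<1}. \<bar>ee L K (resps (qq L K) v 1 ?N) 1 - v\<bar> \<le> \<epsilon> / 2} = {0..<1}"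
  proof -
    have "\<bar>ee L K (resps (qq L K) v 1 ?N) 1 - v\<bar> \<le> \<epsilon> / 2" if v: "v \<in> {0..<1}" for v
    proof -
      have "resps (qq L K) v 1 ?N = RR L K v ?N" using resps_RR[OF L] v by auto
      hence "ee L K (resps (qq L K) v 1 ?N) 1 = EE L K v" using ee_RR[OF L] v by auto
      moreover have "\<bar>EE L K v - v\<bar> \<le> 1 / (2 * real L * 2^K)" using EE_acc[OF L] v by auto
      moreover have "1 / (2 * real L * 2^K) \<le> \<epsilon> / 2" using M by simp
      ultimately show ?thesis by linarith
    qed
    thus ?thesis by auto
  qed
  show ?thesis
    unfolding B_private_unif_def
  proof (intro conjI allI impI)
    show "learner_strategy ?N 1 (qq L K) (ee L K)" by (rule ls)
    show "(\<Sum>y\<in>{1..1}. emeasure lborel {v \<in> {0..<1}. \<bar>ee L K (resps (qq L K) v y ?N) y - v\<bar> \<le> \<epsilon> / 2}) / of_nat 1 = 1"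
      using acc by simp
  next
    fix psi :: "real list \<Rightarrow> real measure" assume adv: "adversary psi"
    have "(\<Sum>y\<in>{1..1}. \<integral>\<^sup>+ v. indicator {0..<1} v * emeasure (psi (queries (qq L K) v y ?N)) {x. \<bar>x - v\<bar> \<le> \<delta> / 2} \<partial>lborel) / of_nat 1
       = (\<integral>\<^sup>+ v. indicator {0..<1} v * emeasure (psi (queries (qq L K) v 1 ?N)) {x. \<bar>x - v\<bar> \<le> \<delta> / 2} \<partial>lborel)"
      by (simp add: divide_ennreal_def)
    also have "\<dots> \<le> ennreal (1 / real L)" by (rule privacy[OF L dl d0 adv])
    also have "\<dots> = 1 / of_nat L"
      using L divide_ennreal[of 1 "real L"] by (simp add: ennreal_of_nat_eq_real_of_nat)
    finally show "(\<Sum>y\<in>{1..1}. \<integral>\<^sup>+ v. indicator {0..<1} v * emeasure (psi (queries (qq L K) v y ?N)) {x. \<bar>x - v\<bar> \<le> \<delta> / 2} \<partial>lborel) / of_nat 1 \<le> 1 / of_nat L" .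
  qed
qed

theorem proposition3:
  fixes \<epsilon> \<delta> :: real and L :: nat
  assumes "\<epsilon> > 0" and "\<delta> > 0" and "L \<ge> 2"
    and "2 * \<epsilon> < \<delta>" and "\<delta> \<le> 1 / real L"
  shows "(\<exists>N Yc q est. B_private_unif \<epsilon> \<delta> L N Yc q est)
       \<and> log 2 (1 / \<epsilon>) \<le> real (NB_unif \<epsilon> \<delta> L)
       \<and> real (NB_unif \<epsilon> \<delta> L)
           \<le> real L * real_of_int \<lceil>log 2 (1 / (real L * \<epsilon>))\<rceil> + real L - 1"
proof -
  note e = assms(1) and d0 = assms(2) and L = assms(3) and ed = assms(4) and dl = assms(5)
  define x where "x = 1 / (real L * \<epsilon>)"
  have Lp: "real L > 0" using L by simp
  have Le: "real L * \<epsilon> < 1"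
  proof -
    have "real L * \<delta> \<le> 1" using dl Lp by (simp add: field_simps)
    moreover have "real L * (2 * \<epsilon>) < real L * \<delta>" using ed Lp by simp
    ultimately show ?thesis by linarith
  qed
  have x1: "x > 1" unfolding x_def using Le Lp e by (simp add: field_simps)
  have lg0: "log 2 x > 0" using x1 by simp
  define K where "K = nat \<lceil>log 2 x\<rceil>"
  have cK: "real_of_int \<lceil>log 2 x\<rceil> = real K" unfolding K_def using lg0 by simp
  have "log 2 x \<le> real K" unfolding K_def using lg0 by linarith
  hence "2 powr (log 2 x) \<le> 2 powr (real K)" by (rule powr_mono) simp
  hence "x \<le> 2^K" using x1 by (simp add: powr_realpow)
  hence M: "1 / (real L * 2^K) \<le> \<epsilon>" unfolding x_def using Lp e
    by (simp add: field_simps)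
  define P where "P N = (\<exists>Yc q est. B_private_unif \<epsilon> \<delta> L N Yc q est)" for N
  have P0: "P (L - 1 + L * K)" unfolding P_def using upper_strategy[OF L d0 dl e M] by blast
  have NB: "NB_unif \<epsilon> \<delta> L = (LEAST N. P N)" unfolding NB_unif_def P_def by simp
  have PNB: "P (NB_unif \<epsilon> \<delta> L)" unfolding NB using P0 by (rule LeastI)
  have le: "NB_unif \<epsilon> \<delta> L \<le> L - 1 + L * K" unfolding NB using P0 by (rule Least_le)
  have low: "1 \<le> 2 ^ NB_unif \<epsilon> \<delta> L * \<epsilon>" using PNB lower_bound e unfolding P_def by blast
  have "1 / \<epsilon> \<le> 2 ^ NB_unif \<epsilon> \<delta> L" using low e by (simp add: field_simps)
  hence "log 2 (1 / \<epsilon>) \<le> log 2 (2 ^ NB_unif \<epsilon> \<delta> L)"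
    using e log_le_cancel_iff[of 2 "1 / \<epsilon>" "2 ^ NB_unif \<epsilon> \<delta> L"] by simp
  hence lowf: "log 2 (1 / \<epsilon>) \<le> real (NB_unif \<epsilon> \<delta> L)" by simp
  have "real (NB_unif \<epsilon> \<delta> L) \<le> real (L - 1 + L * K)" using le by (simp only: of_nat_le_iff)
  also have "\<dots> = real L * real K + real L - 1" using L by (simp add: of_nat_diff)
  finally have upf: "real (NB_unif \<epsilon> \<delta> L) \<le> real L * real_of_int \<lceil>log 2 (1 / (real L * \<epsilon>))\<rceil> + real L - 1"
    using cK unfolding x_def by simp
  show ?thesis using P0 lowf upf unfolding P_def by blast
qed

end
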